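(* Under the setting of the context (arbitrary $S^{(0)},F_2^{(0)}$, $A_2\neq0$, $Q^\top Q=I_k$, $\mu_0>0$, $\rho>1$), there is a constant $\gamma\ge 0$ such that $\|A_2-QS^{(k)}-F_2^{(k)}\|_F\le \frac{\gamma}{\mu_k}$ for all $k=1,2,\dots$.
   Context: For a matrix $X$, $\|X\|_1=\sum_{i,j}|X_{ij}|$, $\|X\|_\infty=\max_{i,j}|X_{ij}|$, $\|X\|_F$ the Frobenius norm, $\langle Y,X\rangle=\mathrm{Trace}(Y^\top X)$. The shrinkage operator $\mathcal{S}_\tau$ acts entrywise by $\mathcal{S}_\tau(x)=\mathrm{sign}(x)\max\{|x|-\tau,0\}$. Augmented Lagrangian: $L(S,F_2,Y,\mu)=\|F_2\|_1+\langle Y,A_2-QS-F_2\rangle+\frac{\mu}{2}\|A_2-QS-F_2\|_F^2$, with $A_2\in\mathbb{R}^{m\times n}$, $Q\in\mathbb{R}^{m\times k}$, $Q^\top Q=I_k$. ALM iteration: $Y^{(0)}=A_2/\|A_2\|_\infty$, and for $k\ge0$: $S^{(k+1)}=Q^\top(A_2-F_2^{(k)}+\frac{1}{\mu_k}Y^{(k)})$, $F_2^{(k+1)}=\mathcal{S}_{1/\mu_k}(A_2-QS^{(k+1)}+\frac{1}{\mu_k}Y^{(k)})$, $Y^{(k+1)}=Y^{(k)}+\mu_k(A_2-QS^{(k+1)}-F_2^{(k+1)})$, $\mu_{k+1}=\rho\mu_k$. *)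

theory Defs
  imports "HOL-Analysis.Analysis"
begin

text \<open>Matrices are rendered as real ^ 'c ^ 'r (rows indexed by 'r, columns by 'c).\<close>

definition frob_norm :: "real ^ 'c ^ 'r \<Rightarrow> real" where
  "frob_norm X = sqrt (\<Sum>i\<in>UNIV. \<Sum>j\<in>UNIV. (X $ i $ j)\<^sup>2)"

definition max_norm :: "real ^ 'c ^ 'r \<Rightarrow> real" where
  "max_norm X = Max {\<bar>X $ i $ j\<bar> | i j. True}"

definition shrink :: "real \<Rightarrow> real \<Rightarrow> real" where
  "shrink \<tau> x = sgn x * max (\<bar>x\<bar> - \<tau>) 0"

definition shrink_mat :: "real \<Rightarrow> real ^ 'c ^ 'r \<Rightarrow> real ^ 'c ^ 'r" where
  "shrink_mat \<tau> X = (\<chi> i j. shrink \<tau> (X $ i $ j))"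

end

theory Submission
  imports Defs
begin

lemma frob_eq_norm: "frob_norm (X :: real ^ 'c ^ 'r) = norm X"
  unfolding frob_norm_def norm_vec_def L2_set_def
  by (simp add: sum_nonneg)

lemma shrink_close: "\<tau> \<ge> 0 \<Longrightarrow> \<bar>z - shrink \<tau> z\<bar> \<le> \<tau>"
  unfolding shrink_def by (auto simp: sgn_if abs_if max_def)

lemma frob_bound:
  fixes X :: "real ^ 'c ^ 'r"
  assumes "\<And>i j. \<bar>X $ i $ j\<bar> \<le> 1"
  shows "norm X \<le> sqrt (real (CARD('r) * CARD('c)))"
proof -
  have "(\<Sum>i\<in>UNIV. \<Sum>j\<in>UNIV. (X $ i $ j)\<^sup>2) \<le> (\<Sum>i\<in>(UNIV::'r set). \<Sum>j\<in>(UNIV::'c set). 1)"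
  proof (intro sum_mono)
    fix i j
    have "\<bar>X $ i $ j\<bar>\<^sup>2 \<le> 1\<^sup>2" using assms[of i j]
      by (intro power_mono) auto
    then show "(X $ i $ j)\<^sup>2 \<le> 1" by simp
  qed
  then show ?thesis unfolding frob_eq_norm[symmetric] frob_norm_def
    by simp
qed

theorem mainTheorem2:
  fixes A2 :: "real ^ 'n ^ 'm" and Q :: "real ^ 'k ^ 'm"
    and S :: "nat \<Rightarrow> real ^ 'n ^ 'k" and F2 Y :: "nat \<Rightarrow> real ^ 'n ^ 'm"
    and \<mu> :: "nat \<Rightarrow> real" and \<rho> :: real
  assumes A2_nz: "A2 \<noteq> 0"
    and Q_orth: "transpose Q ** Q = mat 1"
    and mu0: "\<mu> 0 > 0"
    and rho: "\<rho> > 1"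
    and Y0: "Y 0 = (1 / max_norm A2) *\<^sub>R A2"
    and S_step: "\<And>t. S (Suc t) = transpose Q ** (A2 - F2 t + (1 / \<mu> t) *\<^sub>R Y t)"
    and F_step: "\<And>t. F2 (Suc t) = shrink_mat (1 / \<mu> t) (A2 - Q ** S (Suc t) + (1 / \<mu> t) *\<^sub>R Y t)"
    and Y_step: "\<And>t. Y (Suc t) = Y t + \<mu> t *\<^sub>R (A2 - Q ** S (Suc t) - F2 (Suc t))"
    and mu_step: "\<And>t. \<mu> (Suc t) = \<rho> * \<mu> t"
  shows "\<exists>\<gamma>\<ge>0. \<forall>t\<ge>1. frob_norm (A2 - Q ** S t - F2 t) \<le> \<gamma> / \<mu> t"
proof -
  define C where "C = sqrt (real (CARD('m) * CARD('n)))"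
  have C0: "C \<ge> 0" unfolding C_def by simp
  have mupos: "\<mu> t > 0" for t
    by (induction t) (use mu0 rho mu_step in auto)
  have Ybd: "norm (Y (Suc t)) \<le> C" for t
  proof -
    have "\<bar>Y (Suc t) $ i $ j\<bar> \<le> 1" for i j
    proof -
      define z where "z = (A2 - Q ** S (Suc t) + (1 / \<mu> t) *\<^sub>R Y t) $ i $ j"
      have "Y (Suc t) $ i $ j = \<mu> t * (z - shrink (1 / \<mu> t) z)"
        unfolding Y_step F_step z_def shrink_mat_def
        using mupos[of t] by (simp add: algebra_simps)
      moreover have "\<bar>z - shrink (1 / \<mu> t) z\<bar> \<le> 1 / \<mu> t"
        by (rule shrink_close) (use mupos[of t] in simp)
      ultimately show ?thesis using mupos[of t]
        by (simp add: abs_mult) (metis mult.commute pos_le_divide_eq)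
    qed
    then show ?thesis unfolding C_def by (rule frob_bound)
  qed
  define \<gamma> where "\<gamma> = \<rho> * (2 * C + norm (Y 0))"
  have "\<forall>t\<ge>1. frob_norm (A2 - Q ** S t - F2 t) \<le> \<gamma> / \<mu> t"
  proof (intro allI impI)
    fix t :: nat assume "t \<ge> 1"
    then obtain s where t: "t = Suc s" by (cases t) auto
    have Ys: "norm (Y s) \<le> C + norm (Y 0)"
    proof (cases s)
      case 0 then show ?thesis using C0 by simp
    next
      case (Suc r) show ?thesis unfolding Suc using Ybd[of r] norm_ge_zero[of "Y 0"] by linarith
    qed
    have eq: "A2 - Q ** S t - F2 t = (1 / \<mu> s) *\<^sub>R (Y (Suc s) - Y s)"
      using mupos[of s] unfolding t Y_step by simp
    have "norm (Y (Suc s) - Y s) \<le> 2 * C + norm (Y 0)"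
      using norm_triangle_ineq4[of "Y (Suc s)" "Y s"] Ybd[of s] Ys by linarith
    then have "norm (A2 - Q ** S t - F2 t) \<le> (2 * C + norm (Y 0)) / \<mu> s"
      unfolding eq using mupos[of s] by (simp add: divide_right_mono)
    also have "\<dots> = \<gamma> / \<mu> t"
      unfolding \<gamma>_def t mu_step using rho mupos[of s] by simp
    finally show "frob_norm (A2 - Q ** S t - F2 t) \<le> \<gamma> / \<mu> t"
      by (simp add: frob_eq_norm)
  qed
  moreover have "\<gamma> \<ge> 0" unfolding \<gamma>_def using rho C0 by simp
  ultimately show ?thesis by blast
qed

end
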